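(* For all integers $n\ge 4$ and $2\le k\le n/2$, there exists a feasible irredundant (circular) homogeneous PV graph $\vec G_R$ with $n$ sites and $k$ carriers such that $$\mathcal M(\vec G_R)\ \ge\ n(k-1).$$ (This holds even though the agent knows $\vec G_R$, $n$ and $k$ and has unlimited memory.)
   Context: A PV (periodically varying) system consists of a finite set $S$ of $n$ sites and a set $C$ of $k\le n$ carriers. Each carrier $c$ has a route $\pi(c)=\langle x_0,\dots,x_{p(c)-1}\rangle$, a finite sequence of sites of length $p(c)\ge1$ called its period; $\pi(c)[j]=x_{j\bmod p(c)}$. At each time $t\in\mathbb N$ carrier $c$ is at $\pi(c)[t]$ and moves to $\pi(c)[t+1]$. The PV graph $\vec G_R$ is the directed edge-labelled multigraph on $S$ with edges $(x_i,x_{i+1},i)$, $0\le i<p(c)$, for every carrier. The system is homogeneous if all $p(c)$ are equal, heterogeneous otherwise. A route is simple if $\pi(c)[i]\ne\pi(c)[i+1]$ for all $i$ and, whenever $\pi(c)[i]=\pi(c)[j]$ with $0\le i<j<p(c)$, then $\pi(c)[i+1]\ne\pi(c)[j+1]$. A route is irredundant (circular) if it is simple and the directed multigraph it describes is either a simple cycle (the sites $x_0,\dots,x_{p(c)-1}$ are distinct) or a virtual cycle, i.e. the closed walk of a simple traversal of a tree (each tree edge traversed once in each direction); in particular $p(c)\le 2(n-1)$. A PV graph is irredundant if all its routes are irredundant. An exploring agent is injected at time $0$ at a site of $\mathrm{start}(\vec G_R)=\{\pi(c)[0]:c\in C\}$; if at time $t$ it is at site $x$ it must either ride one step with some carrier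 $c$ with $\pi(c)[t]=x$ (one move) or halt; it cannot wait. A strategy solves PVG-Exploration of $\vec G_R$ if from every injection site the agent visits all sites and halts in finite time. $\vec G_R$ is feasible if from the starting point of every carrier some realizable walk visits all sites. For feasible $\vec G_R$, $\mathcal M(\vec G_R)$ denotes the minimum, over all deterministic strategies solving PVG-Exploration of $\vec G_R$ (which may use full knowledge of $\vec G_R$ and unlimited memory), of the maximum over injection sites of the number of moves performed. *)

theory Defs
  imports Main
begin

(* A PV system with n sites and k carriers: sites are {..<n}, carriers are {..<k},
   R c is the route (period) of carrier c, a nonempty list of sites. *)

definition pv_system :: "nat \<Rightarrow> nat \<Rightarrow> (nat \<Rightarrow> nat list) \<Rightarrow> bool" where
  "pv_system n k R \<longleftrightarrow> 1 \<le> k \<and> k \<le> n \<and>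
     (\<forall>c<k. R c \<noteq> [] \<and> set (R c) \<subseteq> {..<n})"

definition rt :: "nat list \<Rightarrow> nat \<Rightarrow> nat" where
  "rt r j = r ! (j mod length r)"

definition pos :: "(nat \<Rightarrow> nat list) \<Rightarrow> nat \<Rightarrow> nat \<Rightarrow> nat" where
  "pos R c t = rt (R c) t"

definition homogeneous :: "nat \<Rightarrow> (nat \<Rightarrow> nat list) \<Rightarrow> bool" where
  "homogeneous k R \<longleftrightarrow> (\<forall>c<k. \<forall>d<k. length (R c) = length (R d))"

definition simple_route :: "nat list \<Rightarrow> bool" where
  "simple_route r \<longleftrightarrow> r \<noteq> [] \<and>
     (\<forall>i. rt r i \<noteq> rt r (Suc i)) \<and>
     (\<forall>i j. i < j \<and> j < length r \<and> rt r i = rt r j \<longrightarrow> rt r (Suc i) \<noteq> rt r (Suc j))"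

definition route_edges :: "nat list \<Rightarrow> nat set set" where
  "route_edges r = {{rt r i, rt r (Suc i)} | i. i < length r}"

definition is_tree :: "'a set \<Rightarrow> 'a set set \<Rightarrow> bool" where
  "is_tree V E \<longleftrightarrow> finite V \<and> V \<noteq> {} \<and>
     (\<forall>e\<in>E. \<exists>u v. e = {u, v} \<and> u \<noteq> v \<and> u \<in> V \<and> v \<in> V) \<and>
     (\<forall>u\<in>V. \<forall>v\<in>V. (u, v) \<in> {(x, y). {x, y} \<in> E}\<^sup>*) \<and>
     card E = card V - 1"

definition simple_cycle_route :: "nat list \<Rightarrow> bool" where
  "simple_cycle_route r \<longleftrightarrow> distinct r"

definition virtual_cycle_route :: "nat list \<Rightarrow> bool" where
  "virtual_cycle_route r \<longleftrightarrow> is_tree (set r) (route_edges r) \<and>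
     (\<forall>u v. {u, v} \<in> route_edges r \<and> u \<noteq> v \<longrightarrow>
        (\<exists>!i. i < length r \<and> rt r i = u \<and> rt r (Suc i) = v))"

definition irredundant_route :: "nat list \<Rightarrow> bool" where
  "irredundant_route r \<longleftrightarrow> simple_route r \<and> (simple_cycle_route r \<or> virtual_cycle_route r)"

definition irredundant_pv :: "nat \<Rightarrow> (nat \<Rightarrow> nat list) \<Rightarrow> bool" where
  "irredundant_pv k R \<longleftrightarrow> (\<forall>c<k. irredundant_route (R c))"

definition start_sites :: "nat \<Rightarrow> (nat \<Rightarrow> nat list) \<Rightarrow> nat set" where
  "start_sites k R = {pos R c 0 | c. c < k}"

(* A walk of the agent injected at site s at time 0 is the list cs of carriers it rides:
   at time t it rides carrier cs!t (from pos R (cs!t) t to pos R (cs!t) (t+1)); it halts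
   after the last move. No waiting is allowed, so consecutive rides must connect. *)
definition realizable_walk :: "nat \<Rightarrow> (nat \<Rightarrow> nat list) \<Rightarrow> nat \<Rightarrow> nat list \<Rightarrow> bool" where
  "realizable_walk k R s cs \<longleftrightarrow>
     (\<forall>t<length cs. cs ! t < k) \<and>
     (cs \<noteq> [] \<longrightarrow> pos R (cs ! 0) 0 = s) \<and>
     (\<forall>t. Suc t < length cs \<longrightarrow> pos R (cs ! t) (Suc t) = pos R (cs ! Suc t) (Suc t))"

definition visited :: "(nat \<Rightarrow> nat list) \<Rightarrow> nat \<Rightarrow> nat list \<Rightarrow> nat set" where
  "visited R s cs = insert s {pos R (cs ! t) (Suc t) | t. t < length cs}"

definition explores :: "nat \<Rightarrow> nat \<Rightarrow> (nat \<Rightarrow> nat list) \<Rightarrow> nat \<Rightarrow> nat list \<Rightarrow> bool" where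
  "explores n k R s cs \<longleftrightarrow> realizable_walk k R s cs \<and> {..<n} \<subseteq> visited R s cs"

definition feasible :: "nat \<Rightarrow> nat \<Rightarrow> (nat \<Rightarrow> nat list) \<Rightarrow> bool" where
  "feasible n k R \<longleftrightarrow> (\<forall>c<k. \<exists>cs. explores n k R (pos R c 0) cs)"

(* A deterministic strategy (full knowledge of the PV graph, unlimited memory) determines,
   for each injection site s, the finite walk performed; it solves PVG-Exploration iff every
   such walk explores all sites. *)
definition solves :: "nat \<Rightarrow> nat \<Rightarrow> (nat \<Rightarrow> nat list) \<Rightarrow> (nat \<Rightarrow> nat list) \<Rightarrow> bool" where
  "solves n k R W \<longleftrightarrow> (\<forall>s\<in>start_sites k R. explores n k R s (W s))"

definition M_moves :: "nat \<Rightarrow> nat \<Rightarrow> (nat \<Rightarrow> nat list) \<Rightarrow> nat" where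
  "M_moves n k R = (LEAST m. \<exists>W. solves n k R W \<and> (\<forall>s\<in>start_sites k R. length (W s) \<le> m))"

end

theory Submission imports Defs begin

lemma concat_pairs_len: "length (concat (map (\<lambda>i. [a, f i]) [0..<m])) = 2*m"
  by (induction m) auto

lemma concat_pairs_nth: "j < 2*m \<Longrightarrow> concat (map (\<lambda>i. [a, f i]) [0..<m]) ! j = (if even j then a else f (j div 2))"
proof (induction m arbitrary: j)
  case 0 then show ?case by simp
next
  case (Suc m)
  have e: "concat (map (\<lambda>i. [a, f i]) [0..<Suc m]) = concat (map (\<lambda>i. [a, f i]) [0..<m]) @ [a, f m]" by simp
  show ?case
  proof (cases "j < 2*m")
    case True then show ?thesis using Suc by (simp add: e nth_append concat_pairs_len)
  next
    case False
    then have "j = 2*m \<or> j = 2*m+1" using Suc.prems by auto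
    then show ?thesis by (auto simp: e nth_append concat_pairs_len)
  qed
qed

lemma mod_le_lemma: "(x::nat) mod m = y mod m \<Longrightarrow> y < x + m \<Longrightarrow> y \<le> x"
proof (rule ccontr)
  assume a: "x mod m = y mod m" "y < x + m" "\<not> y \<le> x"
  then have "m dvd (y - x)" using mod_eq_dvd_iff_nat[of x y m] by simp
  moreover have "0 < y - x" "y - x < m" using a by auto
  ultimately show False using dvd_imp_le by fastforce
qed

lemma modcancel: "(a + i) mod (r::nat) = (a + j) mod r \<Longrightarrow> i < r \<Longrightarrow> j < r \<Longrightarrow> i = j"
proof -
  assume h: "(a + i) mod (r::nat) = (a + j) mod r" "i < r" "j < r"
  have "a + i \<le> a + j" using mod_le_lemma[of "a+j" r "a+i"] h by simp
  moreover have "a + j \<le> a + i" using mod_le_lemma[of "a+i" r "a+j"] h by simp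
  ultimately show "i = j" by simp
qed



definition starL :: "nat \<Rightarrow> (nat \<Rightarrow> nat) \<Rightarrow> nat \<Rightarrow> nat list" where
  "starL a f m = concat (map (\<lambda>i. [a, f i]) [0..<m])"

lemma in_visited: "t < length cs \<Longrightarrow> x = pos R (cs!t) (Suc t) \<Longrightarrow> x \<in> visited R s cs"
  unfolding visited_def by blast

lemma starL_len: "length (starL a f m) = 2*m"
  by (simp add: starL_def concat_pairs_len)

lemma rt_starL: "0 < m \<Longrightarrow> rt (starL a f m) t = (if even t then a else f ((t mod (2*m)) div 2))"
proof -
  assume m: "0 < m"
  have lt: "t mod (2*m) < 2*m" using m by simp
  have ev: "even (t mod (2*m)) = even t" by (metis dvd_mod_iff dvd_triv_left even_mod_2_iff mod_mod_cancel)
  show ?thesis unfolding rt_def starL_len using concat_pairs_nth[OF lt, of a f] ev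
    by (simp add: starL_def)
qed


lemma rt_starL_lt: "i < 2*m \<Longrightarrow> rt (starL a f m) i = (if even i then a else f (i div 2))"
  using rt_starL[of m a f i] by simp

lemma set_starL: "0 < m \<Longrightarrow> set (starL a f m) = insert a (f ` {..<m})"
  by (auto simp: starL_def)

lemma star_irr:
  assumes m: "0 < m" and inj: "inj_on f {..<m}" and ne: "\<forall>i<m. f i \<noteq> a"
  shows "irredundant_route (starL a f m)"
proof -
  let ?L = "starL a f m"
  have rtG: "\<And>t. rt ?L t = (if even t then a else f ((t mod (2*m)) div 2))"
    using rt_starL[OF m] by blast
  have oddlt: "\<And>t. (t mod (2*m)) div 2 < m"
  proof -
    fix t have "t mod (2*m) < m*2" using m by (simp add: mult.commute)
    then show "(t mod (2*m)) div 2 < m" by (rule less_mult_imp_div_less)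
  qed
  have rtne: "\<And>t. odd t \<Longrightarrow> rt ?L t \<noteq> a" using rtG oddlt ne by simp
  have lt: "\<And>i. i < 2*m \<Longrightarrow> rt ?L i = (if even i then a else f (i div 2))"
    by (rule rt_starL_lt)
  have sucE: "\<And>i. i < 2*m \<Longrightarrow> even i \<Longrightarrow> rt ?L (Suc i) = f (i div 2)"
  proof -
    fix i assume i: "i < 2*m" "even i"
    then have "Suc i < 2*m" by (metis Suc_lessI dvd_mult even_Suc dvd_triv_left)
    then show "rt ?L (Suc i) = f (i div 2)" using lt[of "Suc i"] i by simp
  qed
  have sucO: "\<And>i. odd i \<Longrightarrow> rt ?L (Suc i) = a" using rtG by simp
  have simple: "simple_route ?L"
    unfolding simple_route_def
  proof (intro conjI allI impI)
    show "?L \<noteq> []" using starL_len[of a f m] m by auto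
  next
    fix i show "rt ?L i \<noteq> rt ?L (Suc i)"
      using rtne[of i] rtne[of "Suc i"] rtG[of i] rtG[of "Suc i"] by (cases "even i") auto
  next
    fix i j assume h: "i < j \<and> j < length ?L \<and> rt ?L i = rt ?L j"
    then have ij: "i < j" "j < 2*m" "rt ?L i = rt ?L j" using starL_len[of a f m] by auto
    show "rt ?L (Suc i) \<noteq> rt ?L (Suc j)"
    proof (cases "even i")
      case True
      then have "rt ?L i = a" using lt ij by simp
      then have ej: "even j" using ij rtne by metis
      have "i div 2 \<noteq> j div 2" using ij True ej by (metis dvd_div_mult_self less_irrefl)
      moreover have "i div 2 < m" "j div 2 < m" using ij by auto
      ultimately have "f (i div 2) \<noteq> f (j div 2)" using inj by (auto dest: inj_onD)
      then show ?thesis using sucE[of i] sucE[of j] ij True ej by simp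
    next
      case False
      then have oj: "odd j" using ij lt ne by (metis less_mult_imp_div_less less_trans oddlt rtG)
      have "i div 2 \<noteq> j div 2" using ij False oj by (metis odd_two_times_div_two_succ less_irrefl)
      moreover have "i div 2 < m" "j div 2 < m" using ij by auto
      ultimately have "f (i div 2) \<noteq> f (j div 2)" using inj by (auto dest: inj_onD)
      then have False using ij lt[of i] lt[of j] False oj by simp
      then show ?thesis ..
    qed
  qed
  let ?E = "(\<lambda>j. {a, f j}) ` {..<m}"
  have edges: "route_edges ?L = ?E"
  proof
    show "route_edges ?L \<subseteq> ?E"
    proof
      fix e assume "e \<in> route_edges ?L"
      then obtain i where i: "i < 2*m" "e = {rt ?L i, rt ?L (Suc i)}"
        unfolding route_edges_def using starL_len[of a f m] by auto
      show "e \<in> ?E"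
      proof (cases "even i")
        case True then show ?thesis using i lt sucE by auto
      next
        case False then show ?thesis using i lt sucO by (auto simp: insert_commute)
      qed
    qed
  next
    show "?E \<subseteq> route_edges ?L"
    proof
      fix e assume "e \<in> ?E"
      then obtain j where j: "j < m" "e = {a, f j}" by auto
      have "rt ?L (2*j) = a" "rt ?L (Suc (2*j)) = f j" using lt[of "2*j"] sucE[of "2*j"] j by auto
      then show "e \<in> route_edges ?L" unfolding route_edges_def using j starL_len[of a f m]
        by (auto intro!: exI[of _ "2*j"])
    qed
  qed
  have injE: "inj_on (\<lambda>j. {a, f j}) {..<m}"
  proof (rule inj_onI)
    fix i j assume "i \<in> {..<m}" "j \<in> {..<m}" "{a, f i} = {a, f j}"
    then show "i = j" using ne inj by (metis doubleton_eq_iff inj_onD lessThan_iff)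
  qed
  have cardE: "card ?E = m" using card_image[OF injE] by simp
  have anot: "a \<notin> f ` {..<m}" using ne by auto
  have cardV: "card (insert a (f ` {..<m})) = m + 1"
    using anot card_image[OF inj] by simp
  have tree: "is_tree (set ?L) (route_edges ?L)"
    unfolding is_tree_def set_starL[OF m] edges
  proof (intro conjI ballI)
    show "finite (insert a (f ` {..<m}))" by simp
    show "insert a (f ` {..<m}) \<noteq> {}" by simp
  next
    fix e assume "e \<in> ?E"
    then show "\<exists>u v. e = {u, v} \<and> u \<noteq> v \<and> u \<in> insert a (f ` {..<m}) \<and> v \<in> insert a (f ` {..<m})"
      using ne by auto
  next
    fix u v assume u: "u \<in> insert a (f ` {..<m})" and v: "v \<in> insert a (f ` {..<m})"
    let ?rel = "{(x, y). {x, y} \<in> ?E}"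
    have ua: "(u, a) \<in> ?rel\<^sup>*" using u by (auto simp: insert_commute)
    have av: "(a, v) \<in> ?rel\<^sup>*" using v by auto
    show "(u, v) \<in> ?rel\<^sup>*" using ua av by (rule rtrancl_trans)
  next
    show "card ?E = card (insert a (f ` {..<m})) - 1" using cardE cardV by simp
  qed
  have uniq: "\<forall>u v. {u, v} \<in> route_edges ?L \<and> u \<noteq> v \<longrightarrow>
        (\<exists>!i. i < length ?L \<and> rt ?L i = u \<and> rt ?L (Suc i) = v)"
  proof (intro allI impI)
    fix u v assume h: "{u, v} \<in> route_edges ?L \<and> u \<noteq> v"
    then obtain j where j: "j < m" "{u, v} = {a, f j}" using edges by auto
    have len: "length ?L = 2*m" by (rule starL_len)
    from j(2) have "(u = a \<and> v = f j) \<or> (u = f j \<and> v = a)" by (auto simp: doubleton_eq_iff)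
    then show "\<exists>!i. i < length ?L \<and> rt ?L i = u \<and> rt ?L (Suc i) = v"
    proof
      assume uv: "u = a \<and> v = f j"
      show ?thesis
      proof (rule ex1I[of _ "2*j"])
        show "2*j < length ?L \<and> rt ?L (2*j) = u \<and> rt ?L (Suc (2*j)) = v"
          using uv j len lt[of "2*j"] sucE[of "2*j"] by auto
      next
        fix i assume i: "i < length ?L \<and> rt ?L i = u \<and> rt ?L (Suc i) = v"
        then have ei: "even i" using rtne uv by blast
        then have "f (i div 2) = f j" using i sucE[of i] uv len by simp
        then have "i div 2 = j" using inj j i len by (auto dest: inj_onD)
        then show "i = 2*j" using ei by auto
      qed
    next
      assume uv: "u = f j \<and> v = a"
      show ?thesis
      proof (rule ex1I[of _ "2*j+1"])
        show "2*j+1 < length ?L \<and> rt ?L (2*j+1) = u \<and> rt ?L (Suc (2*j+1)) = v"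
          using uv j len lt[of "2*j+1"] sucO[of "2*j+1"] by auto
      next
        fix i assume i: "i < length ?L \<and> rt ?L i = u \<and> rt ?L (Suc i) = v"
        have oi: "odd i"
        proof
          assume ei: "even i"
          have "i < 2*m" using i len by simp
          then have "rt ?L i = a" using lt ei by simp
          then show False using i uv ne j by auto
        qed
        then have "f (i div 2) = f j" using i lt[of i] uv len by simp
        then have "i div 2 = j" using inj j i len by (auto dest: inj_onD)
        then show "i = 2*j+1" using oi by (metis odd_two_times_div_two_succ)
      qed
    qed
  qed
  show ?thesis unfolding irredundant_route_def virtual_cycle_route_def
    using simple tree uniq by blast
qed


definition ctr :: "nat \<Rightarrow> nat \<Rightarrow> nat \<Rightarrow> nat" where
  "ctr n k c = (if c < k - 1 then c else n - 1)"

definition val0 :: "nat \<Rightarrow> nat \<Rightarrow> nat \<Rightarrow> nat \<Rightarrow> nat" where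
  "val0 n k c i = (if c < k - 1 then
      (if i < 2*k-3-2*c then (c+1+i) mod (n-2) else if i = 2*k-3-2*c then n-2 else (c+i) mod (n-2))
     else (k-1+i) mod (n-2))"

definition valr :: "nat \<Rightarrow> nat \<Rightarrow> nat \<Rightarrow> nat \<Rightarrow> nat" where
  "valr n k c i = val0 n k c ((i + (2*k-3)) mod (n-2))"

definition route :: "nat \<Rightarrow> nat \<Rightarrow> nat \<Rightarrow> nat list" where
  "route n k c = starL (ctr n k c) (valr n k c) (n-2)"

definition TT :: "nat \<Rightarrow> nat \<Rightarrow> nat" where
  "TT n j = 2*(n-2) - 1 + j*(2*(n-2)-4)"

definition wf :: "nat \<Rightarrow> nat \<Rightarrow> nat \<Rightarrow> nat \<Rightarrow> nat" where
  "wf n k c t = (if t < TT n c then c else min (k-1) (c + 1 + (t - TT n c) div (2*(n-2)-4)))"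

definition wb :: "nat \<Rightarrow> nat \<Rightarrow> nat \<Rightarrow> nat" where
  "wb n k t = (if t < TT n (k-2) then k-1 else k-2)"

context
  fixes n k :: nat
  assumes n4: "4 \<le> n" and k2: "2 \<le> k" and kn: "2*k \<le> n"
begin

lemma r_pos: "0 < n - 2" using n4 by simp

lemma val0_lt: "val0 n k c i < n - 1"
proof -
  have m: "\<And>x. x mod (n-2) < n-2" using r_pos by simp
  have "val0 n k c i \<le> n-2" unfolding val0_def using m by (simp add: less_imp_le)
  then show ?thesis using n4 by linarith
qed

lemma val0_lt2: "\<not> c < k - 1 \<Longrightarrow> val0 n k c i < n - 2"
  unfolding val0_def using r_pos by simp

lemma val0_ne: "c < k \<Longrightarrow> i < n-2 \<Longrightarrow> val0 n k c i \<noteq> ctr n k c"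
proof -
  assume c: "c < k" and i: "i < n-2"
  show ?thesis
  proof (cases "c < k - 1")
    case False
    then show ?thesis using val0_lt2[OF False, of i] by (simp add: ctr_def)
  next
    case True
    let ?s = "2*k-3-2*c"
    have s: "?s < n - 2" using True kn by linarith
    have ck: "c < n - 2" using True kn by linarith
    have A: "(c+1+i) mod (n-2) \<noteq> c" if "i < ?s"
    proof
      assume "(c+1+i) mod (n-2) = c"
      then have eq: "(c + (i+1)) mod (n-2) = (c + 0) mod (n-2)" using ck by simp
      have "i+1 < n-2" using that s by simp
      from modcancel[OF eq this r_pos] have "i + 1 = 0" .
      then show False by simp
    qed
    have B: "(c+i) mod (n-2) \<noteq> c" if "\<not> i < ?s" "i \<noteq> ?s"
    proof
      assume "(c+i) mod (n-2) = c"
      then have eq: "(c + i) mod (n-2) = (c + 0) mod (n-2)" using ck by simp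
      from modcancel[OF eq i r_pos] have "i = 0" .
      then show False using that by simp
    qed
    have "n - 2 \<noteq> c" using ck by simp
    then show ?thesis using A B True unfolding val0_def ctr_def by auto
  qed
qed


lemma modcancel2: "(i + a) mod (r::nat) = (i + b) mod r \<Longrightarrow> a < r \<Longrightarrow> b < r \<Longrightarrow> a = b"
  using modcancel[of i a r b] by simp

lemma kr: "k - 1 < n - 2" using kn k2 by linarith

lemma val0_inj: "i < n-2 \<Longrightarrow> j < n-2 \<Longrightarrow> val0 n k c i = val0 n k c j \<Longrightarrow> i = j"
proof -
  assume i: "i < n-2" and j: "j < n-2" and e: "val0 n k c i = val0 n k c j"
  have m: "\<And>x. x mod (n-2) \<noteq> n-2" using r_pos by (metis less_irrefl mod_less_divisor)
  show "i = j"
  proof (cases "c < k - 1")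
    case False
    then have "((k-1)+i) mod (n-2) = ((k-1)+j) mod (n-2)" using e by (simp add: val0_def)
    then show ?thesis by (rule modcancel[OF _ i j])
  next
    case True
    define s where "s = 2*k-3-2*c"
    have s: "s < n - 2" using True kn unfolding s_def by linarith
    have v: "\<And>x. val0 n k c x = (if x < s then ((c+1)+x) mod (n-2) else if x = s then n-2 else (c+x) mod (n-2))"
      using True unfolding val0_def s_def by simp
    have cross: False if "x < s" "s < y" "y < n-2" "((c+1)+x) mod (n-2) = (c+y) mod (n-2)" for x y
    proof -
      have eq: "(c + (x+1)) mod (n-2) = (c+y) mod (n-2)" using that(4) by (simp add: add.assoc add.commute)
      have "x+1 < n-2" using that s by simp
      then have "x + 1 = y" by (rule modcancel[OF eq _ that(3)])
      then show False using that by simp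
    qed
    consider "i < s" | "i = s" | "s < i" by linarith
    then show ?thesis
    proof cases
      case 1
      consider "j < s" | "j = s" | "s < j" by linarith
      then show ?thesis
      proof cases
        case 1
        then have "((c+1)+i) mod (n-2) = ((c+1)+j) mod (n-2)" using e v[of i] v[of j] \<open>i < s\<close> by simp
        then show ?thesis by (rule modcancel[OF _ i j])
      next
        case 2 then have False using e v[of i] v[of j] \<open>i < s\<close> m by simp
        then show ?thesis ..
      next
        case 3 then have "((c+1)+i) mod (n-2) = (c+j) mod (n-2)" using e v[of i] v[of j] \<open>i < s\<close> by simp
        then have False using cross[OF \<open>i < s\<close> 3 j] by simp
        then show ?thesis ..
      qed
    next
      case 2
      then have e2: "val0 n k c j = n - 2" using e v[of i] by simp
      have "j = s"
      proof (rule ccontr)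
        assume "j \<noteq> s" then show False using e2 v[of j] m by (cases "j < s") simp_all
      qed
      then show ?thesis using 2 by simp
    next
      case 3
      consider "j < s" | "j = s" | "s < j" by linarith
      then show ?thesis
      proof cases
        case 1 then have "((c+1)+j) mod (n-2) = (c+i) mod (n-2)" using e v[of i] v[of j] \<open>s < i\<close> by simp
        then have False using cross[OF 1 \<open>s < i\<close> i] by simp
        then show ?thesis ..
      next
        case 2 then have False using e v[of i] v[of j] \<open>s < i\<close> m by simp
        then show ?thesis ..
      next
        case 3 then have "(c+i) mod (n-2) = (c+j) mod (n-2)" using e v[of i] v[of j] \<open>s < i\<close> by simp
        then show ?thesis by (rule modcancel[OF _ i j])
      qed
    qed
  qed
qed

lemma val0_coll: "c < d \<Longrightarrow> d < k \<Longrightarrow> i < n-2 \<Longrightarrow> val0 n k c i = val0 n k d i \<Longrightarrow> d = c+1 \<and> i = 2*k-4-2*c"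
proof -
  assume cd: "c < d" and dk: "d < k" and i: "i < n-2" and e: "val0 n k c i = val0 n k d i"
  have m0: "\<And>x. x mod (n-2) \<noteq> n-2" using r_pos by (metis less_irrefl mod_less_divisor)
  have m: "\<And>x. x mod (n-2) \<noteq> n-2" "\<And>x. n-2 \<noteq> x mod (n-2)" using m0 by metis+
  have c1: "c < k - 1" using cd dk by simp
  define s where "s = 2*k-3-2*c"
  have vc: "val0 n k c i = (if i < s then ((c+1)+i) mod (n-2) else if i = s then n-2 else (c+i) mod (n-2))"
    using c1 unfolding val0_def s_def by simp
  have cb: "c + 1 < n - 2" "c < n - 2" using c1 kr by auto
  show ?thesis
  proof (cases "d < k - 1")
    case False
    then have dd: "d = k - 1" using dk by simp
    have vd: "val0 n k d i = ((k-1)+i) mod (n-2)" using False unfolding val0_def by simp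
    have "i < s"
    proof (rule ccontr)
      assume ns: "\<not> i < s"
      show False
      proof (cases "i = s")
        case True then show False using e vc vd m by simp
      next
        case False
        then have "(i + c) mod (n-2) = (i + (k-1)) mod (n-2)" using e vc vd ns by (simp add: ac_simps)
        then have "c = k - 1" by (rule modcancel2) (use cb kr in auto)
        then show False using c1 by simp
      qed
    qed
    then have "(i + (c+1)) mod (n-2) = (i + (k-1)) mod (n-2)" using e vc vd by (simp add: ac_simps)
    then have "c + 1 = k - 1" by (rule modcancel2) (use cb kr in auto)
    then show ?thesis using dd \<open>i < s\<close> unfolding s_def by auto
  next
    case True
    define s' where "s' = 2*k-3-2*d"
    have vd: "val0 n k d i = (if i < s' then ((d+1)+i) mod (n-2) else if i = s' then n-2 else (d+i) mod (n-2))"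
      using True unfolding val0_def s'_def by simp
    have db: "d + 1 < n - 2" "d < n - 2" using True kr by auto
    have ss: "s' + 2 \<le> s" using cd True unfolding s_def s'_def by linarith
    have "s' < i \<and> i < s"
    proof (rule ccontr)
      assume "\<not> (s' < i \<and> i < s)"
      then consider "i < s'" | "i = s'" | "i = s" | "s < i" by linarith
      then show False
      proof cases
        case 1
        then have "(i + (c+1)) mod (n-2) = (i + (d+1)) mod (n-2)" using e vc vd ss by (simp add: ac_simps)
        then have "c+1 = d+1" by (rule modcancel2) (use cb db in auto)
        then show False using cd by simp
      next
        case 2 then show False using e vc vd ss m by simp
      next
        case 3 then show False using e vc vd ss m by simp
      next
        case 4
        then have "(i + c) mod (n-2) = (i + d) mod (n-2)" using e vc vd ss by (simp add: ac_simps)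
        then have "c = d" by (rule modcancel2) (use cb db in auto)
        then show False using cd by simp
      qed
    qed
    then have "(i + (c+1)) mod (n-2) = (i + d) mod (n-2)" using e vc vd by (simp add: ac_simps)
    then have "c + 1 = d" by (rule modcancel2) (use cb db in auto)
    then have "s' + 2 = s" using True unfolding s_def s'_def by linarith
    then show ?thesis using \<open>c+1 = d\<close> \<open>s' < i \<and> i < s\<close> unfolding s_def by linarith
  qed
qed

lemma val0_meet: "c + 1 < k \<Longrightarrow> val0 n k c (2*k-4-2*c) = val0 n k (c+1) (2*k-4-2*c)"
proof (cases "c + 1 < k - 1")
  case True then show ?thesis unfolding val0_def by (auto simp: add.commute)
next
  case False
  assume ck: "c + 1 < k"
  then have "c + 1 = k - 1" "2*k-4-2*c = 0" using False by linarith+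
  then have z: "2*k-4-2*c = 0" "k - 1 = c + 1" by simp_all
  have "val0 n k c 0 = (c+1) mod (n-2)" unfolding val0_def using ck z by auto
  moreover have "val0 n k (c+1) 0 = (c+1) mod (n-2)" unfolding val0_def using False z by simp
  ultimately show ?thesis using z by simp
qed


lemma rho_lt: "(i + (2*k-3)) mod (n-2) < n-2" using r_pos by simp

lemma valr_inj: "i < n-2 \<Longrightarrow> j < n-2 \<Longrightarrow> valr n k c i = valr n k c j \<Longrightarrow> i = j"
proof -
  assume i: "i < n-2" and j: "j < n-2" and e: "valr n k c i = valr n k c j"
  have "(i + (2*k-3)) mod (n-2) = (j + (2*k-3)) mod (n-2)"
    using val0_inj[OF rho_lt rho_lt] e unfolding valr_def by blast
  then have "((2*k-3) + i) mod (n-2) = ((2*k-3) + j) mod (n-2)" by (simp add: add.commute)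
  then show "i = j" by (rule modcancel[OF _ i j])
qed

lemma valr_lt: "valr n k c i < n - 1" unfolding valr_def by (rule val0_lt)
lemma valr_lt2: "\<not> c < k - 1 \<Longrightarrow> valr n k c i < n - 2" unfolding valr_def by (rule val0_lt2)
lemma valr_ne: "c < k \<Longrightarrow> valr n k c i \<noteq> ctr n k c" unfolding valr_def using val0_ne rho_lt by blast

lemma rho_meet: "c + 1 < k \<Longrightarrow> ((n-2-1-2*c) + (2*k-3)) mod (n-2) = 2*k-4-2*c"
proof -
  assume c: "c + 1 < k"
  have "(n-2-1-2*c) + (2*k-3) = (2*k-4-2*c) + (n-2)" using c kn k2 by linarith
  moreover have "2*k-4-2*c < n-2" using c kn by linarith
  ultimately show ?thesis by (metis mod_add_self2 mod_less)
qed

lemma valr_coll: "c < d \<Longrightarrow> d < k \<Longrightarrow> i < n-2 \<Longrightarrow> valr n k c i = valr n k d i \<Longrightarrow> d = c+1 \<and> i = n-2-1-2*c"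
proof -
  assume cd: "c < d" and dk: "d < k" and i: "i < n-2" and e: "valr n k c i = valr n k d i"
  have h: "d = c + 1 \<and> (i + (2*k-3)) mod (n-2) = 2*k-4-2*c"
    using val0_coll[OF cd dk rho_lt] e unfolding valr_def by blast
  then have "(i + (2*k-3)) mod (n-2) = ((n-2-1-2*c) + (2*k-3)) mod (n-2)" using rho_meet dk by simp
  then have "((2*k-3) + i) mod (n-2) = ((2*k-3) + (n-2-1-2*c)) mod (n-2)" by (simp add: add.commute)
  moreover have "n-2-1-2*c < n-2" using r_pos by linarith
  ultimately have "i = n-2-1-2*c" by (intro modcancel[OF _ i]) 
  then show ?thesis using h by simp
qed

lemma valr_meet: "c + 1 < k \<Longrightarrow> valr n k c (n-2-1-2*c) = valr n k (c+1) (n-2-1-2*c)"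
  unfolding valr_def using rho_meet val0_meet by simp

lemma pos_route: "pos (route n k) c t = (if even t then ctr n k c else valr n k c ((t mod (2*(n-2))) div 2))"
  unfolding pos_def route_def using rt_starL[OF r_pos] by simp

lemma slot_lt: "(t mod (2*(n-2))) div 2 < n - 2"
proof -
  have "t mod (2*(n-2)) < (n-2)*2" using r_pos by (simp add: mult.commute)
  then show ?thesis by (rule less_mult_imp_div_less)
qed

lemma ctr_inj: "a < k \<Longrightarrow> b < k \<Longrightarrow> ctr n k a = ctr n k b \<Longrightarrow> a = b"
  unfolding ctr_def using kn k2 by (auto split: if_splits)

lemma aux4: "4 \<le> (q::nat) \<Longrightarrow> j*(q-4) + 4*j = j*q"
  by (simp add: diff_mult_distrib2 mult.commute)

lemma TT_eq: "j + 1 < k \<Longrightarrow> TT n j = (2*(n-2)-1-4*j) + j*(2*(n-2))"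
proof -
  assume j: "j + 1 < k"
  have a: "j*(2*(n-2)-4) + 4*j = j*(2*(n-2))" using n4 by (intro aux4) simp
  have c: "4*j \<le> 2*(n-2)-1" using j kn by linarith
  show ?thesis unfolding TT_def using a c by linarith
qed

lemma TT_mod: "j + 1 < k \<Longrightarrow> TT n j mod (2*(n-2)) = 2*(n-2)-1-4*j"
proof -
  assume j: "j + 1 < k"
  have "2*(n-2)-1-4*j < 2*(n-2)" using r_pos by linarith
  then show ?thesis using TT_eq[OF j] by simp
qed

lemma meet_pos: "j + 1 < k \<Longrightarrow> pos (route n k) j (TT n j) = pos (route n k) (j+1) (TT n j)"
proof -
  assume j: "j + 1 < k"
  have m: "TT n j mod (2*(n-2)) = 2*(n-2)-1-4*j" by (rule TT_mod[OF j])
  have c: "4*j \<le> 2*(n-2)-1" "2*j \<le> n-2-1" using j kn by linarith+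
  have e2: "2*(n-2)-1-4*j = 2*(n-2-1-2*j) + 1" using c n4 by linarith
  have od: "odd (TT n j)"
  proof -
    have "odd (2*(n-2)-1-4*j)" using e2 by simp
    then show ?thesis using m by (metis dvd_mod_iff dvd_triv_left)
  qed
  have sl: "(TT n j mod (2*(n-2))) div 2 = n-2-1-2*j" using m e2 by simp
  show ?thesis using pos_route od sl valr_meet[OF j] by simp
qed


lemma odd_slot: "odd t \<Longrightarrow> t mod (2*(n-2)) = 2*((t mod (2*(n-2))) div 2) + 1"
proof -
  assume "odd t"
  then have "odd (t mod (2*(n-2)))" by (metis dvd_mod_iff dvd_triv_left)
  then show ?thesis by (metis odd_two_times_div_two_succ)
qed

lemma ctr_zero: "c < k \<Longrightarrow> ctr n k c = 0 \<Longrightarrow> c = 0"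
  unfolding ctr_def using n4 by (auto split: if_splits)

lemma coll_pos: "a < k \<Longrightarrow> b < k \<Longrightarrow> a \<noteq> b \<Longrightarrow> pos (route n k) a t = pos (route n k) b t \<Longrightarrow>
   \<exists>j. j + 1 < k \<and> ((a = j \<and> b = j + 1) \<or> (a = j + 1 \<and> b = j)) \<and> t mod (2*(n-2)) = 2*(n-2)-1-4*j"
proof -
  assume a: "a < k" and b: "b < k" and ab: "a \<noteq> b" and e: "pos (route n k) a t = pos (route n k) b t"
  have ot: "odd t"
  proof
    assume "even t" then have "ctr n k a = ctr n k b" using e pos_route by simp
    then show False using ctr_inj a b ab by blast
  qed
  define i where "i = (t mod (2*(n-2))) div 2"
  have il: "i < n-2" unfolding i_def by (rule slot_lt)
  have ti: "t mod (2*(n-2)) = 2*i+1" unfolding i_def using odd_slot[OF ot] .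
  have ev: "valr n k a i = valr n k b i" using e pos_route ot unfolding i_def by simp
  have fin: "t mod (2*(n-2)) = 2*(n-2)-1-4*j" if "i = n-2-1-2*j" "j + 1 < k" for j
  proof -
    have "2*j \<le> n-2-1" using that(2) kn by linarith
    then show ?thesis using ti that(1) n4 by linarith
  qed
  show ?thesis
  proof (cases "a < b")
    case True
    from valr_coll[OF True b il ev] have h: "b = a + 1" "i = n-2-1-2*a" by auto
    show ?thesis using h fin[of a] b by (intro exI[of _ a]) auto
  next
    case False
    then have ba: "b < a" using ab by simp
    from valr_coll[OF ba a il ev[symmetric]] have h: "a = b + 1" "i = n-2-1-2*b" by auto
    show ?thesis using h fin[of b] a by (intro exI[of _ b]) auto
  qed
qed

lemma TT_mono: "i \<le> j \<Longrightarrow> TT n i \<le> TT n j"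
  unfolding TT_def by (simp add: mult_le_mono1)

lemma TT_step: "TT n (Suc j) = TT n j + (2*(n-2)-4)"
  unfolding TT_def by simp

lemma lb_inv: "realizable_walk k (route n k) 0 cs \<Longrightarrow> t < length cs \<Longrightarrow> 1 \<le> cs!t \<Longrightarrow> TT n (cs!t - 1) \<le> t"
proof (induction t)
  case 0
  then have "pos (route n k) (cs!0) 0 = 0" "cs!0 < k" unfolding realizable_walk_def by auto
  then have "ctr n k (cs!0) = 0" using pos_route by simp
  then have "cs!0 = 0" using ctr_zero \<open>cs!0 < k\<close> by blast
  then show ?case using 0 by simp
next
  case (Suc t)
  let ?a = "cs!t" and ?b = "cs!Suc t"
  have ak: "?a < k" "?b < k" using Suc.prems unfolding realizable_walk_def by auto
  have e: "pos (route n k) ?a (Suc t) = pos (route n k) ?b (Suc t)"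
    using Suc.prems unfolding realizable_walk_def by auto
  have IH: "1 \<le> ?a \<Longrightarrow> TT n (?a - 1) \<le> t" using Suc by simp
  show ?case
  proof (cases "?a = ?b")
    case True then show ?thesis using IH Suc.prems by simp
  next
    case False
    from coll_pos[OF ak False e] obtain j where j: "j + 1 < k"
      "(?a = j \<and> ?b = j + 1) \<or> (?a = j + 1 \<and> ?b = j)" "Suc t mod (2*(n-2)) = 2*(n-2)-1-4*j" by blast
    from j(2) show ?thesis
    proof
      assume h: "?a = j \<and> ?b = j + 1"
      have m: "Suc t mod (2*(n-2)) = TT n j mod (2*(n-2))" using j(3) TT_mod[OF j(1)] by simp
      have lt: "TT n j < Suc t + 2*(n-2)"
      proof (cases j)
        case 0 then show ?thesis unfolding TT_def by simp
      next
        case (Suc j')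
        then have "TT n j' \<le> t" using IH h by simp
        then show ?thesis using TT_step[of j'] Suc by simp
      qed
      have "TT n j \<le> Suc t" by (rule mod_le_lemma[OF m lt])
      then show ?thesis using h by simp
    next
      assume h: "?a = j + 1 \<and> ?b = j"
      show ?thesis
      proof -
        have "TT n j \<le> t" using IH h by simp
        moreover have "TT n (?b - 1) \<le> TT n j" using h by (intro TT_mono) simp
        ultimately show ?thesis by simp
      qed
    qed
  qed
qed

lemma TT_bound: "n*(k-1) \<le> TT n (k-2) + 1"
proof (cases "k = 2")
  case True then show ?thesis unfolding TT_def using n4 by simp
next
  case False
  define a where "a = k - 2"
  have a1: "1 \<le> a" using False k2 unfolding a_def by simp
  have eq: "TT n (k-2) + 1 = 2*(n-2) + a*(2*(n-2)-4)" unfolding TT_def a_def using n4 by simp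
  have eq2: "n*(k-1) = a*n + n" unfolding a_def using k2 by (simp add: algebra_simps)
  show ?thesis
  proof (cases "8 \<le> n")
    case True
    have "a*n \<le> a*(2*(n-2)-4)" by (rule mult_le_mono2) (use True in linarith)
    then show ?thesis using eq eq2 True by linarith
  next
    case False
    then have "k = 3" using kn k2 \<open>k \<noteq> 2\<close> by linarith
    moreover have "n = 6 \<or> n = 7" using False kn \<open>k = 3\<close> by linarith
    ultimately show ?thesis unfolding TT_def by auto
  qed
qed

lemma lb: "explores n k (route n k) 0 cs \<Longrightarrow> n*(k-1) \<le> length cs"
proof -
  assume ex: "explores n k (route n k) 0 cs"
  have rw: "realizable_walk k (route n k) 0 cs" using ex unfolding explores_def by simp
  have "n - 1 \<in> visited (route n k) 0 cs" using ex n4 unfolding explores_def by auto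
  moreover have "n - 1 \<noteq> 0" using n4 by simp
  ultimately obtain t where t: "t < length cs" "pos (route n k) (cs!t) (Suc t) = n - 1"
    unfolding visited_def by auto
  have ck: "cs!t < k" using rw t unfolding realizable_walk_def by auto
  have ev: "even (Suc t)"
  proof (rule ccontr)
    assume "odd (Suc t)"
    then have "pos (route n k) (cs!t) (Suc t) < n - 1" using pos_route valr_lt by simp
    then show False using t by simp
  qed
  then have "ctr n k (cs!t) = n - 1" using t pos_route by simp
  then have "cs!t = k - 1" using ck kn unfolding ctr_def by (auto split: if_splits)
  then have "TT n (k-2) \<le> t" using lb_inv[OF rw t(1)] k2 by (simp add: numeral_2_eq_2)
  then show ?thesis using TT_bound t(1) by linarith
qed


lemma TT_add: "c \<le> a \<Longrightarrow> TT n c + (a - c)*(2*(n-2)-4) = TT n a"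
proof -
  assume "c \<le> a"
  then have "c*(2*(n-2)-4) + (a - c)*(2*(n-2)-4) = a*(2*(n-2)-4)"
    by (metis add_mult_distrib le_add_diff_inverse)
  then show ?thesis unfolding TT_def by linarith
qed

lemma wf_step: "c + 1 < k \<Longrightarrow> pos (route n k) (wf n k c t) (Suc t) = pos (route n k) (wf n k c (Suc t)) (Suc t)"
proof -
  assume c: "c + 1 < k"
  define q where "q = 2*(n-2)-4"
  consider "Suc t < TT n c" | "Suc t = TT n c" | "TT n c < Suc t" by linarith
  then show ?thesis
  proof cases
    case 1 then show ?thesis unfolding wf_def by simp
  next
    case 2
    then have "wf n k c t = c" "wf n k c (Suc t) = c + 1" unfolding wf_def using c by auto
    then show ?thesis using meet_pos[OF c] 2 by simp
  next
    case 3
    define u where "u = t - TT n c"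
    have tu: "t = TT n c + u" "Suc t - TT n c = Suc u" using 3 unfolding u_def by auto
    have n1: "\<not> t < TT n c" "\<not> Suc t < TT n c" using 3 by auto
    have w1: "wf n k c t = min (k-1) (c + 1 + u div q)"
      by (simp only: wf_def if_not_P[OF n1(1)] q_def u_def)
    have w2: "wf n k c (Suc t) = min (k-1) (c + 1 + Suc u div q)"
      by (simp only: wf_def if_not_P[OF n1(2)] q_def tu(2))
    show ?thesis
    proof (cases "Suc u mod q = 0")
      case False
      then have "Suc u div q = u div q" by (simp add: div_Suc)
      then show ?thesis using w1 w2 by simp
    next
      case True
      then have sd: "Suc u div q = Suc (u div q)" by (simp add: div_Suc)
      have qp: "q \<noteq> 0"
      proof
        assume "q = 0" then have "Suc u mod q = Suc u" by (simp only: mod_by_0)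
        then show False using True by (simp only: nat.distinct(1))
      qed
      define a where "a = c + 1 + u div q"
      have w1': "wf n k c t = min (k-1) a" using w1 unfolding a_def .
      have w2': "wf n k c (Suc t) = min (k-1) (a+1)" using w2 sd unfolding a_def by simp
      show ?thesis
      proof (cases "a < k - 1")
        case False
        then have "wf n k c t = k - 1" "wf n k c (Suc t) = k - 1" using w1' w2' by auto
        then show ?thesis by simp
      next
        case True
        have wa: "wf n k c t = a" "wf n k c (Suc t) = a + 1" using w1' w2' True by auto
        have dm: "Suc u div q * q + Suc u mod q = Suc u" by (rule div_mult_mod_eq)
        have "Suc u = (Suc u div q) * q" using dm \<open>Suc u mod q = 0\<close> by simp
        then have "Suc u = (a - c) * q" using sd unfolding a_def by simp
        then have st: "Suc t = TT n c + (a - c) * (2*(n-2)-4)" using tu(1) unfolding q_def by simp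
        have ac: "c \<le> a" by (simp add: a_def)
        have "Suc t = TT n a" using st TT_add[OF ac] by linarith
        moreover have "a + 1 < k" using True by simp
        ultimately show ?thesis using wa meet_pos[of a] by simp
      qed
    qed
  qed
qed

lemma wf_end: "c + 1 < k \<Longrightarrow> wf n k c (TT n (k-2)) = k - 1"
proof -
  assume c: "c + 1 < k"
  have le: "TT n c \<le> TT n (k-2)" using c by (intro TT_mono) simp
  show ?thesis
  proof (cases "2*(n-2)-4 = 0")
    case True
    then have "n = 4" using n4 by simp
    then have "k = 2" "c = 0" using kn k2 c by auto
    then show ?thesis unfolding wf_def by auto
  next
    case False
    have "c \<le> k - 2" using c by simp
    from TT_add[OF this] have "TT n (k-2) - TT n c = (k-2-c)*(2*(n-2)-4)" by linarith
    then have "(TT n (k-2) - TT n c) div (2*(n-2)-4) = k-2-c" using False by simp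
    moreover have "\<not> TT n (k-2) < TT n c" using le by simp
    ultimately show ?thesis unfolding wf_def using c by simp
  qed
qed


lemma pos_odd_form: "i < n-2 \<Longrightarrow> pos (route n k) c (2*i + 1 + m*(2*(n-2))) = valr n k c i"
proof -
  assume i: "i < n-2"
  let ?t = "2*i + 1 + m*(2*(n-2))"
  have "2*i+1 < 2*(n-2)" using i by simp
  then have md: "?t mod (2*(n-2)) = 2*i+1" by simp
  have "odd ?t" by simp
  then show ?thesis using pos_route md by simp
qed

lemma pos_leaf: "i < n-2 \<Longrightarrow> pos (route n k) c (Suc (2*i)) = valr n k c i"
  using pos_odd_form[of i c 0] by simp

lemma val0_X: "val0 n k (k-2) 1 = n - 2"
proof -
  have a: "k-2 < k-1" using k2 by linarith
  have b: "2*k-3-2*(k-2) = 1" using k2 by linarith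
  show ?thesis unfolding val0_def using a b by simp
qed

lemma TT_odd: "odd (TT n j)"
proof -
  have e1: "2*(n-2)-1 = 2*(n-3)+1" using n4 by linarith
  have e2: "2*(n-2)-4 = 2*(n-4)" by simp
  show ?thesis unfolding TT_def e1 e2 by simp
qed

lemma X_visit: "pos (route n k) (k-2) (Suc (Suc (TT n (k-2)))) = n - 2"
proof (cases "k = 2")
  case True
  have t: "Suc (Suc (TT n (k-2))) = 2*0 + 1 + 1*(2*(n-2))" unfolding TT_def True using n4 by simp
  have "valr n k (k-2) 0 = n - 2"
  proof -
    have "(0 + (2*k-3)) mod (n-2) = 1" using True n4 by simp
    then show ?thesis unfolding valr_def using val0_X by simp
  qed
  then show ?thesis using t pos_odd_form[of 0 "k-2" 1] r_pos by simp
next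
  case False
  have j: "k - 2 + 1 < k" using k2 by simp
  have te: "TT n (k-2) = (2*(n-2)-1-4*(k-2)) + (k-2)*(2*(n-2))" by (rule TT_eq[OF j])
  have sl: "n+2-2*k < n-2" using False k2 kn n4 by linarith
  have t: "Suc (Suc (TT n (k-2))) = 2*(n+2-2*k) + 1 + (k-2)*(2*(n-2))" using te False k2 kn by linarith
  have "valr n k (k-2) (n+2-2*k) = n - 2"
  proof -
    have e: "n+2-2*k + (2*k-3) = 1 + (n-2)" using kn k2 n4 by linarith
    have r1: "1 < n-2" using n4 by linarith
    have "(1 + (n-2)) mod (n-2) = 1 mod (n-2)" by (rule mod_add_self2)
    also have "... = 1" using r1 by simp
    finally have "(n+2-2*k + (2*k-3)) mod (n-2) = 1" unfolding e .
    then show ?thesis unfolding valr_def using val0_X by simp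
  qed
  then show ?thesis using t pos_odd_form[OF sl, of "k-2" "k-2"] by simp
qed

lemma valr_img: "c < k \<Longrightarrow> valr n k c ` {..<n-2} \<subseteq> {..<n-1} - {ctr n k c}"
  using valr_lt valr_ne by auto

lemma card_valr: "card (valr n k c ` {..<n-2}) = n - 2"
proof -
  have "inj_on (valr n k c) {..<n-2}" by (rule inj_onI) (use valr_inj in auto)
  then show ?thesis by (simp add: card_image)
qed

lemma valr_surj: "c < k - 1 \<Longrightarrow> valr n k c ` {..<n-2} = {..<n-1} - {c}"
proof -
  assume c: "c < k - 1"
  have ct: "ctr n k c = c" using c unfolding ctr_def by simp
  have sub: "valr n k c ` {..<n-2} \<subseteq> {..<n-1} - {c}" using valr_img[of c] c ct by simp
  have "c < n - 1" using c kn by linarith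
  then have "card ({..<n-1} - {c}) = n - 2" by simp
  then show ?thesis using card_subset_eq[OF _ sub] card_valr by simp
qed

lemma valr_surj_last: "valr n k (k-1) ` {..<n-2} = {..<n-2}"
proof -
  have sub: "valr n k (k-1) ` {..<n-2} \<subseteq> {..<n-2}" using valr_lt2[of "k-1"] by auto
  then show ?thesis using card_subset_eq[OF _ sub] card_valr by simp
qed

lemma TT_ge: "2*(n-2) - 1 \<le> TT n j" unfolding TT_def by simp

lemma feasA: "c + 1 < k \<Longrightarrow> explores n k (route n k) (pos (route n k) c 0) (map (wf n k c) [0..<TT n (k-2) + 1])"
proof -
  assume c: "c + 1 < k"
  let ?cs = "map (wf n k c) [0..<TT n (k-2) + 1]"
  have c1: "c < k - 1" using c by simp
  have p0: "pos (route n k) c 0 = c" using pos_route c1 unfolding ctr_def by simp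
  have small: "\<And>t. t < TT n c \<Longrightarrow> wf n k c t = c" unfolding wf_def by simp
  have TTc: "0 < TT n c" using TT_ge[of c] n4 by linarith
  have rw: "realizable_walk k (route n k) (pos (route n k) c 0) ?cs"
    unfolding realizable_walk_def
  proof (intro conjI allI impI)
    fix t assume tl: "t < length ?cs"
    have "?cs ! t = wf n k c t" using tl by (simp del: upt_Suc)
    moreover have "wf n k c t < k" using c unfolding wf_def by auto
    ultimately show "?cs ! t < k" by simp
  next
    assume "?cs \<noteq> []"
    show "pos (route n k) (?cs ! 0) 0 = pos (route n k) c 0" using small[OF TTc] by (simp del: upt_Suc)
  next
    fix t assume "Suc t < length ?cs"
    then show "pos (route n k) (?cs ! t) (Suc t) = pos (route n k) (?cs ! Suc t) (Suc t)"
      using wf_step[OF c, of t] by (simp del: upt_Suc)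
  qed
  have vis: "{..<n} \<subseteq> visited (route n k) (pos (route n k) c 0) ?cs"
  proof
    fix x assume x: "x \<in> {..<n}"
    show "x \<in> visited (route n k) (pos (route n k) c 0) ?cs"
    proof (cases "x = n - 1")
      case True
      let ?t = "TT n (k-2)"
      have "?cs ! ?t = k - 1" using wf_end[OF c] by (simp del: upt_Suc)
      moreover have "even (Suc ?t)" using TT_odd by simp
      ultimately have "pos (route n k) (?cs ! ?t) (Suc ?t) = n - 1" using pos_route k2 unfolding ctr_def by simp
      moreover have "?t < length ?cs" by simp
      ultimately show ?thesis using True in_visited by metis
    next
      case False
      show ?thesis
      proof (cases "x = c")
        case True then show ?thesis using p0 unfolding visited_def by simp
      next
        case xc: False
        have "x \<in> {..<n-1} - {c}" using x False xc by auto
        then have "x \<in> valr n k c ` {..<n-2}" using valr_surj[OF c1] by simp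
        then obtain i where i: "i < n-2" "x = valr n k c i" by blast
        have it: "2*i < TT n c" using i TT_ge[of c] by linarith
        have le: "TT n c \<le> TT n (k-2)" using c by (intro TT_mono) simp
        have il: "2*i < length ?cs" using it le by simp
        then have "?cs ! (2*i) = wf n k c (2*i)" by (simp del: upt_Suc)
        then have "?cs ! (2*i) = c" using small[OF it] by simp
        moreover have "pos (route n k) c (Suc (2*i)) = x" using pos_leaf i by simp
        ultimately show ?thesis using il in_visited by metis
      qed
    qed
  qed
  show ?thesis unfolding explores_def using rw vis by simp
qed


lemma feasB: "explores n k (route n k) (pos (route n k) (k-1) 0) (map (wb n k) [0..<TT n (k-2) + 2])"
proof -
  let ?cs = "map (wb n k) [0..<TT n (k-2) + 2]"
  let ?T = "TT n (k-2)"
  have p0: "pos (route n k) (k-1) 0 = n - 1" using pos_route unfolding ctr_def by simp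
  have TTp: "0 < ?T" using TT_ge[of "k-2"] n4 by linarith
  have nth: "\<And>t. t < length ?cs \<Longrightarrow> ?cs ! t = wb n k t" by (simp del: upt_Suc)
  have j: "k - 2 + 1 < k" using k2 by simp
  have kk: "k - 2 + 1 = k - 1" using k2 by simp
  have rw: "realizable_walk k (route n k) (pos (route n k) (k-1) 0) ?cs"
    unfolding realizable_walk_def
  proof (intro conjI allI impI)
    fix t assume tl: "t < length ?cs"
    show "?cs ! t < k" using nth[OF tl] k2 unfolding wb_def by simp
  next
    assume "?cs \<noteq> []"
    have "0 < length ?cs" by simp
    then show "pos (route n k) (?cs ! 0) 0 = pos (route n k) (k-1) 0" using nth TTp unfolding wb_def by simp
  next
    fix t assume tl: "Suc t < length ?cs"
    have e1: "?cs ! t = wb n k t" "?cs ! Suc t = wb n k (Suc t)" using nth tl by auto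
    consider "Suc t < ?T" | "Suc t = ?T" | "?T < Suc t" by linarith
    then show "pos (route n k) (?cs ! t) (Suc t) = pos (route n k) (?cs ! Suc t) (Suc t)"
    proof cases
      case 1 then show ?thesis using e1 unfolding wb_def by simp
    next
      case 2
      then have "wb n k t = k - 1" "wb n k (Suc t) = k - 2" unfolding wb_def by auto
      then show ?thesis using e1 meet_pos[OF j] 2 kk by simp
    next
      case 3 then show ?thesis using e1 unfolding wb_def by simp
    qed
  qed
  have vis: "{..<n} \<subseteq> visited (route n k) (pos (route n k) (k-1) 0) ?cs"
  proof
    fix x assume x: "x \<in> {..<n}"
    have xn: "x < n" using x by simp
    consider "x = n - 1" | "x = n - 2" | "x < n - 2" using xn by linarith
    then show "x \<in> visited (route n k) (pos (route n k) (k-1) 0) ?cs"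
    proof cases
      case 1 then show ?thesis using p0 unfolding visited_def by simp
    next
      case 2
      have tl: "Suc ?T < length ?cs" by simp
      have "?cs ! Suc ?T = k - 2" using nth[OF tl] unfolding wb_def by simp
      then have "x = pos (route n k) (?cs ! Suc ?T) (Suc (Suc ?T))" using X_visit 2 by simp
      then show ?thesis using tl in_visited by metis
    next
      case 3
      then have "x \<in> valr n k (k-1) ` {..<n-2}" using valr_surj_last by simp
      then obtain i where i: "i < n-2" "x = valr n k (k-1) i" by blast
      have it: "2*i < ?T" using i TT_ge[of "k-2"] by linarith
      have il: "2*i < length ?cs" using it by simp
      have "?cs ! (2*i) = k - 1" using nth[OF il] it unfolding wb_def by simp
      moreover have "pos (route n k) (k-1) (Suc (2*i)) = x" using pos_leaf i by simp
      ultimately show ?thesis using il in_visited by metis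
    qed
  qed
  show ?thesis unfolding explores_def using rw vis by simp
qed

lemma feas: "feasible n k (route n k)"
  unfolding feasible_def
proof (intro allI impI)
  fix c assume c: "c < k"
  show "\<exists>cs. explores n k (route n k) (pos (route n k) c 0) cs"
  proof (cases "c + 1 < k")
    case True then show ?thesis using feasA by blast
  next
    case False
    then have "c = k - 1" using c by simp
    then show ?thesis using feasB by blast
  qed
qed

lemma start_fin: "start_sites k R = (\<lambda>c. pos R c 0) ` {..<k}"
  unfolding start_sites_def by auto

lemma M_bound: "n * (k - 1) \<le> M_moves n k (route n k)"
proof -
  let ?R = "route n k"
  define P where "P m = (\<exists>W. solves n k ?R W \<and> (\<forall>s\<in>start_sites k ?R. length (W s) \<le> m))" for m
  define W where "W s = (SOME cs. explores n k ?R s cs)" for s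
  have sol: "solves n k ?R W" unfolding solves_def
  proof
    fix s assume "s \<in> start_sites k ?R"
    then obtain c where c: "c < k" "s = pos ?R c 0" unfolding start_sites_def by auto
    then have "\<exists>cs. explores n k ?R s cs" using feas unfolding feasible_def by blast
    then show "explores n k ?R s (W s)" unfolding W_def by (rule someI_ex)
  qed
  have fin: "finite ((\<lambda>s. length (W s)) ` start_sites k ?R)" unfolding start_fin by simp
  have "P (Max ((\<lambda>s. length (W s)) ` start_sites k ?R))"
    unfolding P_def using sol fin by (intro exI[of _ W]) auto
  then have ex: "\<exists>m. P m" by blast
  have PM: "P (M_moves n k ?R)" unfolding M_moves_def P_def[symmetric] using LeastI_ex[OF ex] .
  then obtain W' where W': "solves n k ?R W'" "\<forall>s\<in>start_sites k ?R. length (W' s) \<le> M_moves n k ?R"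
    unfolding P_def by blast
  have z: "pos ?R 0 0 = 0" using pos_route k2 unfolding ctr_def by simp
  have zs: "0 \<in> start_sites k ?R" unfolding start_sites_def using k2 z by force
  have "explores n k ?R 0 (W' 0)" using W'(1) zs unfolding solves_def by blast
  then have "n * (k-1) \<le> length (W' 0)" by (rule lb)
  then show ?thesis using W'(2) zs by fastforce
qed

lemma main_ctx: "\<exists>R. pv_system n k R \<and> homogeneous k R \<and> irredundant_pv k R \<and>
             feasible n k R \<and> n * (k - 1) \<le> M_moves n k R"
proof (intro exI[of _ "route n k"] conjI)
  show "pv_system n k (route n k)" unfolding pv_system_def
  proof (intro conjI allI impI)
    show "1 \<le> k" using k2 by simp
    show "k \<le> n" using kn by simp
  next
    fix c assume c: "c < k"
    show "route n k c \<noteq> []" using starL_len[of "ctr n k c" "valr n k c" "n-2"] r_pos unfolding route_def by auto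
    have "ctr n k c < n" unfolding ctr_def using c kn n4 by auto
    moreover have "\<And>i. valr n k c i < n" using valr_lt n4 by (metis diff_le_self order_less_le_trans)
    ultimately show "set (route n k c) \<subseteq> {..<n}" unfolding route_def set_starL[OF r_pos] by auto
  qed
  show "homogeneous k (route n k)" unfolding homogeneous_def route_def by (simp add: starL_len)
  show "irredundant_pv k (route n k)" unfolding irredundant_pv_def route_def
  proof (intro allI impI)
    fix c assume c: "c < k"
    have inj: "inj_on (valr n k c) {..<n-2}" by (rule inj_onI) (use valr_inj in auto)
    show "irredundant_route (starL (ctr n k c) (valr n k c) (n-2))"
      using star_irr[OF r_pos inj] valr_ne[OF c] by blast
  qed
  show "feasible n k (route n k)" by (rule feas)
  show "n * (k - 1) \<le> M_moves n k (route n k)" by (rule M_bound)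
qed

end

theorem mainTheorem7:
  fixes n k :: nat
  assumes "4 \<le> n" and "2 \<le> k" and "2 * k \<le> n"
  shows "\<exists>R. pv_system n k R \<and> homogeneous k R \<and> irredundant_pv k R \<and>
             feasible n k R \<and> n * (k - 1) \<le> M_moves n k R"
  using main_ctx[OF assms] .

end
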